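(* Let $n\ge 2$ and let $F$ be an exponential functor with $\deg F(t)>0$. Consider $R_{F,\mathbb{Q}}$ with the $W=S_n$-action by signed permutations of variables, denoted $R_{F,\mathbb{Q}}^{\mathrm{sgn}}$, and the ideal $I_{F,\mathbb{Q}}=(F(t_2)-F(t_1),\dots,F(t_n)-F(t_{n-1}))$ with this action, denoted $I_{F,\mathbb{Q}}^{\mathrm{sgn}}$. Then the $R_{F,\mathbb{Q}}^W$-submodule $(I_{F,\mathbb{Q}}^{\mathrm{sgn}})^W$ of $(R_{F,\mathbb{Q}}^{\mathrm{sgn}})^W$ is generated by the $n-1$ antisymmetric polynomials $q_0,\dots,q_{n-2}$, where \[ q_i(t_1,\dots,t_n)=\det\begin{pmatrix} F(t_1)t_1^i & \cdots & F(t_n)t_n^i\\ t_1^{n-2}&\cdots&t_n^{n-2}\\ \vdots&\ddots&\vdots\\ t_1&\cdots&t_n\\ 1&\cdots&1\end{pmatrix}. \]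
   Context: $F$ is an exponential functor: a continuous symmetric monoidal functor from finite-dimensional complex inner product spaces (unitaries, $\oplus$) to finite-dimensional complex inner product super-vector spaces (grading-preserving unitaries, graded $\otimes$), preserving duals, with $F(\mathbb{C})$ having only positive $S^1$-characters; $F(t)\in\mathbb{Z}[t]$ is its graded (even minus odd) character polynomial. $R_{F,\mathbb{Q}}=\big(\mathbb{Q}[t_1,\dots,t_n]/(t_1\cdots t_n-1)\big)[F(t_1)^{-1},\dots,F(t_n)^{-1}]$; $R_{F,\mathbb{Q}}^W$ denotes invariants for the ordinary permutation action. The signed action is $\sigma\cdot f=\mathrm{sign}(\sigma)\,(f\circ\sigma)$ (permuting variables); $(\cdot)^W$ denotes fixed points. *)

theory Defs
  imports "HOL-Computational_Algebra.Polynomial" "HOL-Library.FuncSet"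
          "HOL-Combinatorics.Permutations" "Jordan_Normal_Form.Determinant"
begin

text \<open>Concrete model of R_{F,Q}: its elements are realised as complex-valued functions on
the set of complex points t = (t_0,...,t_{n-1}) with t_0*...*t_{n-1} = 1 and F(t_i) nonzero
(coordinates i >= n are fixed to 0). Since the ring is a reduced, irreducible localisation,
this realisation is injective.\<close>

definition Fc :: "int poly \<Rightarrow> complex \<Rightarrow> complex" where
  "Fc F z = poly (map_poly of_int F) z"

definition pts :: "nat \<Rightarrow> int poly \<Rightarrow> (nat \<Rightarrow> complex) set" where
  "pts n F = {t. (\<forall>i\<ge>n. t i = 0) \<and> (\<Prod>i<n. t i) = 1 \<and> (\<forall>i<n. Fc F (t i) \<noteq> 0)}"

inductive_set qpoly :: "nat \<Rightarrow> ((nat \<Rightarrow> complex) \<Rightarrow> complex) set" for n :: nat where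
  qconst: "c \<in> \<rat> \<Longrightarrow> (\<lambda>t. c) \<in> qpoly n"
| qvar: "i < n \<Longrightarrow> (\<lambda>t. t i) \<in> qpoly n"
| qadd: "p \<in> qpoly n \<Longrightarrow> q \<in> qpoly n \<Longrightarrow> (\<lambda>t. p t + q t) \<in> qpoly n"
| qmult: "p \<in> qpoly n \<Longrightarrow> q \<in> qpoly n \<Longrightarrow> (\<lambda>t. p t * q t) \<in> qpoly n"

text \<open>R_{F,Q} = (Q[t]/(t_1...t_n - 1))[F(t_1)^{-1},...,F(t_n)^{-1}].\<close>
definition RF :: "nat \<Rightarrow> int poly \<Rightarrow> ((nat \<Rightarrow> complex) \<Rightarrow> complex) set" where
  "RF n F = {restrict (\<lambda>t. p t / (\<Prod>i<n. Fc F (t i)) ^ k) (pts n F) | p k. p \<in> qpoly n}"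

definition perm_var :: "(nat \<Rightarrow> nat) \<Rightarrow> ((nat \<Rightarrow> complex) \<Rightarrow> complex) \<Rightarrow> ((nat \<Rightarrow> complex) \<Rightarrow> complex)" where
  "perm_var \<sigma> f = (\<lambda>t. f (t \<circ> \<sigma>))"

definition RF_W :: "nat \<Rightarrow> int poly \<Rightarrow> ((nat \<Rightarrow> complex) \<Rightarrow> complex) set" where
  "RF_W n F = {f \<in> RF n F. \<forall>\<sigma>. \<sigma> permutes {..<n} \<longrightarrow>
                 (\<forall>t\<in>pts n F. perm_var \<sigma> f t = f t)}"

definition sgn_fixed :: "nat \<Rightarrow> int poly \<Rightarrow> ((nat \<Rightarrow> complex) \<Rightarrow> complex) set
                          \<Rightarrow> ((nat \<Rightarrow> complex) \<Rightarrow> complex) set" where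
  "sgn_fixed n F S = {f \<in> S. \<forall>\<sigma>. \<sigma> permutes {..<n} \<longrightarrow>
                 (\<forall>t\<in>pts n F. of_int (sign \<sigma>) * perm_var \<sigma> f t = f t)}"

definition IF :: "nat \<Rightarrow> int poly \<Rightarrow> ((nat \<Rightarrow> complex) \<Rightarrow> complex) set" where
  "IF n F = {restrict (\<lambda>t. \<Sum>i<n-1. a i t * (Fc F (t (Suc i)) - Fc F (t i))) (pts n F) | a.
              \<forall>i<n-1. a i \<in> RF n F}"

definition qmat :: "nat \<Rightarrow> int poly \<Rightarrow> nat \<Rightarrow> (nat \<Rightarrow> complex) \<Rightarrow> complex mat" where
  "qmat n F i t = mat n n (\<lambda>(r, j). if r = 0 then Fc F (t j) * t j ^ i else t j ^ (n - 1 - r))"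

definition qgen :: "nat \<Rightarrow> int poly \<Rightarrow> nat \<Rightarrow> ((nat \<Rightarrow> complex) \<Rightarrow> complex)" where
  "qgen n F i = restrict (\<lambda>t. det (qmat n F i t)) (pts n F)"

definition q_span :: "nat \<Rightarrow> int poly \<Rightarrow> ((nat \<Rightarrow> complex) \<Rightarrow> complex) set" where
  "q_span n F = {restrict (\<lambda>t. \<Sum>i<n-1. s i t * qgen n F i t) (pts n F) | s.
              \<forall>i<n-1. s i \<in> RF_W n F}"

end

theory Submission
  imports Defs
begin

lemma qpoly_zero: "(\<lambda>t. 0) \<in> qpoly n" using qconst[of 0] by simp
lemma qpoly_one: "(\<lambda>t. 1) \<in> qpoly n" using qconst[of 1] by simp
lemma qpoly_neg: "p \<in> qpoly n \<Longrightarrow> (\<lambda>t. - p t) \<in> qpoly n"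
  using qmult[OF qconst[of "-1"], of p] by simp
lemma qpoly_diff: "p \<in> qpoly n \<Longrightarrow> q \<in> qpoly n \<Longrightarrow> (\<lambda>t. p t - q t) \<in> qpoly n"
  using qadd[OF _ qpoly_neg, of p n q] by simp
lemma qpoly_scale: "c \<in> \<rat> \<Longrightarrow> p \<in> qpoly n \<Longrightarrow> (\<lambda>t. c * p t) \<in> qpoly n"
  using qmult[OF qconst[of c]] by simp

lemma qpoly_sum: "finite A \<Longrightarrow> (\<And>x. x \<in> A \<Longrightarrow> f x \<in> qpoly n) \<Longrightarrow> (\<lambda>t. \<Sum>x\<in>A. f x t) \<in> qpoly n"
proof (induction A rule: finite_induct)
  case empty then show ?case by (simp add: qpoly_zero)
next
  case (insert x F) then show ?case using qadd[of "f x" n "\<lambda>t. \<Sum>x\<in>F. f x t"] by simp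
qed

lemma qpoly_prod: "finite A \<Longrightarrow> (\<And>x. x \<in> A \<Longrightarrow> f x \<in> qpoly n) \<Longrightarrow> (\<lambda>t. \<Prod>x\<in>A. f x t) \<in> qpoly n"
proof (induction A rule: finite_induct)
  case empty then show ?case by (simp add: qpoly_one)
next
  case (insert x F) then show ?case using qmult[of "f x" n "\<lambda>t. \<Prod>x\<in>F. f x t"] by simp
qed

lemma qpoly_pow: "p \<in> qpoly n \<Longrightarrow> (\<lambda>t. p t ^ k) \<in> qpoly n"
  using qpoly_prod[of "{..<k}" "\<lambda>_. p" n] by simp

lemma qpoly_Fc: "i < n \<Longrightarrow> (\<lambda>t. Fc F (t i)) \<in> qpoly n"
proof -
  assume i: "i < n"
  have "(\<lambda>t. \<Sum>d\<le>degree (map_poly (of_int::int\<Rightarrow>complex) F). coeff (map_poly of_int F) d * t i ^ d) \<in> qpoly n"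
    by (rule qpoly_sum) (auto intro!: qpoly_scale qpoly_pow qvar i simp: coeff_map_poly)
  then show ?thesis unfolding Fc_def poly_altdef by simp
qed

lemma qpoly_comp: "p \<in> qpoly n \<Longrightarrow> (\<And>m. m < n \<Longrightarrow> (\<lambda>t. \<phi> t m) \<in> qpoly n) \<Longrightarrow> (\<lambda>t. p (\<phi> t)) \<in> qpoly n"
proof (induction rule: qpoly.induct)
  case (qconst c) then show ?case by (simp add: qpoly.qconst)
next
  case (qvar i) then show ?case by simp
next
  case (qadd p q) then show ?case using qpoly.qadd by auto
next
  case (qmult p q) then show ?case using qpoly.qmult by auto
qed

lemma qpoly_perm: assumes "p \<in> qpoly n" "\<sigma> permutes {..<n}" shows "(\<lambda>t. p (t \<circ> \<sigma>)) \<in> qpoly n"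
proof -
  have "(\<lambda>t. p ((\<lambda>t. t \<circ> \<sigma>) t)) \<in> qpoly n"
  proof (rule qpoly_comp[OF assms(1)])
    fix m assume "m < n"
    then have "\<sigma> m < n" using assms(2) by (metis lessThan_iff permutes_in_image)
    then show "(\<lambda>t. (t \<circ> \<sigma>) m) \<in> qpoly n" using qvar[of "\<sigma> m" n] by simp
  qed
  then show ?thesis by simp
qed

lemma qpoly_upd: assumes "p \<in> qpoly n" "j < n" shows "(\<lambda>t. p (t(i := t j))) \<in> qpoly n"
proof -
  have "(\<lambda>t. p ((\<lambda>t. t(i := t j)) t)) \<in> qpoly n"
  proof (rule qpoly_comp[OF assms(1)])
    fix m assume "m < n"
    then show "(\<lambda>t. (t(i := t j)) m) \<in> qpoly n" using qvar[of m n] qvar[of j n] assms(2) by (cases "m = i") auto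
  qed
  then show ?thesis by simp
qed

lemma qpoly_div: "p \<in> qpoly n \<Longrightarrow> j < n \<Longrightarrow> \<exists>q\<in>qpoly n. \<forall>t. p t - p (t(i := t j)) = (t i - t j) * q t"
proof (induction rule: qpoly.induct)
  case (qconst c) then show ?case using qpoly_zero by auto
next
  case (qvar k)
  show ?case
  proof (cases "k = i")
    case True then show ?thesis using qpoly_one by (intro bexI[of _ "\<lambda>t. 1"]) auto
  next
    case False then show ?thesis using qpoly_zero by (intro bexI[of _ "\<lambda>t. 0"]) auto
  qed
next
  case (qadd p q)
  then obtain a b where a: "a \<in> qpoly n" "\<forall>t. p t - p (t(i := t j)) = (t i - t j) * a t"
    and b: "b \<in> qpoly n" "\<forall>t. q t - q (t(i := t j)) = (t i - t j) * b t" by blast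
  show ?case
  proof (rule bexI[of _ "\<lambda>t. a t + b t"])
    show "(\<lambda>t. a t + b t) \<in> qpoly n" using a(1) b(1) by (rule qpoly.qadd)
    show "\<forall>t. p t + q t - (p (t(i := t j)) + q (t(i := t j))) = (t i - t j) * (a t + b t)"
    proof
      fix t
      have "p t + q t - (p (t(i := t j)) + q (t(i := t j))) = (p t - p (t(i := t j))) + (q t - q (t(i := t j)))"
        by simp
      also have "\<dots> = (t i - t j) * (a t + b t)" using a(2) b(2) by (simp add: distrib_left)
      finally show "p t + q t - (p (t(i := t j)) + q (t(i := t j))) = (t i - t j) * (a t + b t)" .
    qed
  qed
next
  case (qmult p q)
  then obtain a b where a: "a \<in> qpoly n" "\<forall>t. p t - p (t(i := t j)) = (t i - t j) * a t"
    and b: "b \<in> qpoly n" "\<forall>t. q t - q (t(i := t j)) = (t i - t j) * b t" by blast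
  have pu: "(\<lambda>t. p (t(i := t j))) \<in> qpoly n" using qpoly_upd qmult by blast
  show ?case
  proof (rule bexI[of _ "\<lambda>t. a t * q t + p (t(i := t j)) * b t"])
    show "\<forall>t. p t * q t - p (t(i := t j)) * q (t(i := t j)) = (t i - t j) * (a t * q t + p (t(i := t j)) * b t)"
    proof
      fix t
      have "p t * q t - p (t(i := t j)) * q (t(i := t j)) = (p t - p (t(i := t j))) * q t + p (t(i := t j)) * (q t - q (t(i := t j)))"
        by (simp add: algebra_simps)
      also have "\<dots> = (t i - t j) * (a t * q t + p (t(i := t j)) * b t)"
      proof -
        have e1: "p t - p (t(i := t j)) = (t i - t j) * a t" using a(2) by blast
        have e2: "q t - q (t(i := t j)) = (t i - t j) * b t" using b(2) by blast
        show ?thesis unfolding e1 e2 by (simp add: algebra_simps)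
      qed
      finally show "p t * q t - p (t(i := t j)) * q (t(i := t j)) = (t i - t j) * (a t * q t + p (t(i := t j)) * b t)" .
    qed
    show "(\<lambda>t. a t * q t + p (t(i := t j)) * b t) \<in> qpoly n"
      using a b pu qmult by (intro qpoly.qadd qpoly.qmult) auto
  qed
qed

lemma qpoly_cont: "p \<in> qpoly n \<Longrightarrow> isCont (\<lambda>s::complex. p (t(m := t m + s))) s0"
proof (induction rule: qpoly.induct)
  case (qconst c) then show ?case by simp
next
  case (qvar i)
  show ?case
  proof (cases "i = m")
    case True
    have "isCont (\<lambda>s::complex. t m + s) s0" by (intro continuous_intros)
    then show ?thesis using True by simp
  next
    case False then show ?thesis by simp
  qed
next
  case (qadd p q) then show ?case using isCont_add by blast
next
  case (qmult p q) then show ?case using isCont_mult by blast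
qed

lemma cont_zero:
  fixes \<phi> :: "complex \<Rightarrow> complex"
  assumes "isCont \<phi> 0" "\<And>s. s \<noteq> 0 \<Longrightarrow> \<phi> s = 0" shows "\<phi> 0 = 0"
proof -
  have "\<phi> \<midarrow>0\<rightarrow> \<phi> 0" using assms(1) isCont_def by blast
  moreover have "\<phi> \<midarrow>0\<rightarrow> 0"
    by (rule tendsto_eventually) (auto simp: eventually_at intro!: exI[of _ 1] assms(2))
  ultimately show ?thesis using LIM_unique by blast
qed

definition Vd :: "nat \<Rightarrow> (nat \<Rightarrow> complex) \<Rightarrow> complex" where
  "Vd n t = (\<Prod>(a,b)\<in>{(a,b). a < b \<and> b < n}. t a - t b)"

lemma AS_set:
  fixes p :: "(nat \<Rightarrow> complex) \<Rightarrow> complex" and S :: "(nat \<times> nat) set"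
  assumes "finite S" "S \<subseteq> {(a,b). a<b \<and> b<n}" "p \<in> qpoly n"
    "\<forall>t. \<forall>(a,b)\<in>S. t a = t b \<longrightarrow> p t = 0"
  shows "\<exists>q\<in>qpoly n. \<forall>t::nat\<Rightarrow>complex. p t = (\<Prod>(a,b)\<in>S. t a - t b) * q t"
  using assms
proof (induction S arbitrary: p rule: finite_induct)
  case empty then show ?case by auto
next
  case (insert x S)
  obtain i j where x: "x = (i,j)" by force
  have ij: "i < j" "j < n" using insert.prems x by auto
  obtain q1 where q1: "q1 \<in> qpoly n" "\<forall>t. p t - p (t(i := t j)) = (t i - t j) * q1 t"
    using qpoly_div[OF insert.prems(2) ij(2)] by blast
  have hp: "p t = (t i - t j) * q1 t" for t
  proof -
    have a: "\<forall>(a,b)\<in>insert x S. (t(i := t j)) a = (t(i := t j)) b \<longrightarrow> p (t(i := t j)) = 0" using insert.prems(3) by blast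
    have "p (t(i := t j)) = 0" using bspec[OF a, of "(i,j)"] x ij by simp
    then show ?thesis using q1(2) by (metis diff_zero)
  qed
  have van: "\<forall>t. \<forall>(a,b)\<in>S. t a = t b \<longrightarrow> q1 t = 0"
  proof (intro allI ballI impI, clarify)
    fix t :: "nat \<Rightarrow> complex" and k l assume kl: "(k,l) \<in> S" "t k = t l"
    have kl2: "k < l" "l < n" using kl insert.prems(1) by auto
    have ne: "(k,l) \<noteq> (i,j)" using kl insert.hyps(2) x by auto
    show "q1 t = 0"
    proof (cases "t i = t j")
      case False
      have a: "\<forall>(a,b)\<in>insert x S. t a = t b \<longrightarrow> p t = 0" using insert.prems(3) by blast
      have "p t = 0" using bspec[OF a, of "(k,l)"] kl by simp
      then show ?thesis using hp[of t] False by simp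
    next
      case True
      define m where "m = (if i \<notin> {k,l} then i else j)"
      have m1: "m \<notin> {k,l}" using ne ij kl2 unfolding m_def by auto
      have m2: "m = i \<or> m = j" unfolding m_def by auto
      define \<phi> where "\<phi> = (\<lambda>s. q1 (t(m := t m + s)))"
      have c: "isCont \<phi> 0" unfolding \<phi>_def by (rule qpoly_cont[OF q1(1)])
      have z: "\<phi> s = 0" if "s \<noteq> 0" for s
      proof -
        let ?t = "t(m := t m + s)"
        have "?t k = ?t l" using m1 kl by auto
        moreover have a: "\<forall>(a,b)\<in>insert x S. ?t a = ?t b \<longrightarrow> p ?t = 0" using insert.prems(3) by blast
        ultimately have "p ?t = 0" using bspec[OF a, of "(k,l)"] kl by simp
        moreover have "?t i - ?t j \<noteq> 0" using m2 True that ij by auto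
        ultimately show ?thesis using hp[of ?t] unfolding \<phi>_def by simp
      qed
      have "\<phi> 0 = 0" by (rule cont_zero[OF c z])
      then show ?thesis unfolding \<phi>_def by simp
    qed
  qed
  obtain q where q: "q \<in> qpoly n" "\<forall>t. q1 t = (\<Prod>(a,b)\<in>S. t a - t b) * q t"
    using insert.IH[OF _ q1(1) van] insert.prems(1) by blast
  show ?case
  proof (intro bexI[OF _ q(1)] allI)
    fix t
    have "p t = (t i - t j) * ((\<Prod>(a,b)\<in>S. t a - t b) * q t)" using hp q(2) by simp
    also have "\<dots> = (\<Prod>(a,b)\<in>insert x S. t a - t b) * q t"
      using insert.hyps x by simp
    finally show "p t = (\<Prod>(a,b)\<in>insert x S. t a - t b) * q t" .
  qed
qed

lemma AS:
  assumes "p \<in> qpoly n" "\<And>t a b. a < b \<Longrightarrow> b < n \<Longrightarrow> t a = t b \<Longrightarrow> p t = 0"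
  shows "\<exists>q\<in>qpoly n. \<forall>t. p t = Vd n t * q t"
proof -
  have fin: "finite {(a,b). a<b \<and> b<(n::nat)}"
    by (rule finite_subset[of _ "{..<n} \<times> {..<n}"]) auto
  show ?thesis unfolding Vd_def using AS_set[OF fin order.refl assms(1)] assms(2) by blast
qed

lemma det_col_scale:
  "det (mat n n (\<lambda>(r,c). f r c * d c)) = (\<Prod>c<n. d c) * det (mat n n (\<lambda>(r,c). f r c))"
proof -
  have "det (mat n n (\<lambda>(r,c). f r c * d c)) =
    (\<Sum> p | p permutes {0 ..< n}. signof p * (\<Prod>j<n. f (p j) j * d j))"
    by (subst det_col[of _ n]) (auto intro!: sum.cong prod.cong simp: permutes_in_image)
  also have "\<dots> = (\<Sum> p | p permutes {0 ..< n}. (\<Prod>c<n. d c) * (signof p * (\<Prod>j<n. f (p j) j)))"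
    by (auto intro!: sum.cong simp: prod.distrib)
  also have "\<dots> = (\<Prod>c<n. d c) * det (mat n n (\<lambda>(r,c). f r c))"
    by (subst det_col[of _ n]) (auto intro!: sum.cong prod.cong simp: permutes_in_image sum_distrib_left)
  finally show ?thesis .
qed

lemma sum_two_delta:
  fixes g :: "nat \<Rightarrow> complex"
  assumes "r < N"
  shows "(\<Sum>k\<in>{0..<N}. (if r = k then 1 else if k = Suc r then a else 0) * g k)
        = g r + (if Suc r < N then a * g (Suc r) else 0)"
proof -
  have "(\<Sum>k\<in>{0..<N}. (if r = k then 1 else if k = Suc r then a else 0) * g k)
      = (\<Sum>k\<in>{0..<N}. (if k = r then g k else 0) + (if k = Suc r then a * g k else 0))"
    by (rule sum.cong) auto
  also have "\<dots> = g r + (if Suc r < N then a * g (Suc r) else 0)"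
    using assms by (simp add: sum.distrib sum.delta)
  finally show ?thesis .
qed

definition Vmat :: "nat \<Rightarrow> (nat \<Rightarrow> complex) \<Rightarrow> complex mat" where
  "Vmat n t = mat n n (\<lambda>(r,c). t c ^ (n - 1 - r))"

lemma Vd_Suc: "Vd (Suc n) t = Vd n t * (\<Prod>a<n. t a - t n)"
proof -
  have e: "{(a,b). a < b \<and> b < Suc n} = {(a,b). a < b \<and> b < n} \<union> (\<lambda>a. (a,n)) ` {..<n}"
    by auto
  have fin: "finite {(a,b). a<b \<and> b<(n::nat)}"
    by (rule finite_subset[of _ "{..<n} \<times> {..<n}"]) auto
  have d: "{(a,b). a < b \<and> b < n} \<inter> (\<lambda>a. (a,n)) ` {..<n} = {}" by auto
  show ?thesis unfolding Vd_def e
    by (subst prod.union_disjoint[OF fin _ d]) (auto simp: prod.reindex inj_on_def)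
qed

lemma vandermonde: "det (Vmat n t) = Vd n t"
proof (induction n)
  case 0
  show ?case unfolding Vmat_def Vd_def by (simp add: det_dim_zero)
next
  case (Suc n)
  let ?N = "Suc n"
  define A where "A = Vmat ?N t"
  define L :: "complex mat" where "L = mat ?N ?N (\<lambda>(r,c). if r = c then 1 else if c = Suc r then - t n else 0)"
  have AC: "A \<in> carrier_mat ?N ?N" unfolding A_def Vmat_def by simp
  have LC: "L \<in> carrier_mat ?N ?N" unfolding L_def by simp
  have detL: "det L = 1"
  proof -
    have "upper_triangular L" unfolding L_def upper_triangular_def by auto
    then have "det L = prod_list (diag_mat L)" using det_upper_triangular LC by blast
    also have "\<dots> = 1" unfolding prod_list_diag_prod L_def by simp
    finally show ?thesis .
  qed
  define B where "B = mat ?N ?N (\<lambda>(r,c). if r < n then t c ^ (n - 1 - r) * (t c - t n) else 1)"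
  have LA: "L * A = B"
  proof (rule eq_matI)
    show "dim_row (L * A) = dim_row B" "dim_col (L * A) = dim_col B" using LC AC unfolding B_def by auto
    fix r c assume rc: "r < dim_row B" "c < dim_col B"
    then have r: "r < ?N" and c: "c < ?N" unfolding B_def by auto
    have "(L * A) $$ (r,c) = (\<Sum>k\<in>{0..<?N}. (if r = k then 1 else if k = Suc r then - t n else 0) * A $$ (k,c))"
    proof -
      have "(L * A) $$ (r,c) = (\<Sum>k\<in>{0..<?N}. L $$ (r,k) * A $$ (k,c))"
        using r c LC AC by (auto simp: index_mult_mat scalar_prod_def intro!: sum.cong)
      also have "\<dots> = (\<Sum>k\<in>{0..<?N}. (if r = k then 1 else if k = Suc r then - t n else 0) * A $$ (k,c))"
        using r by (intro sum.cong) (auto simp: L_def)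
      finally show ?thesis .
    qed
    also have "\<dots> = A $$ (r,c) + (if Suc r < ?N then - t n * A $$ (Suc r, c) else 0)"
      by (rule sum_two_delta[OF r])
    also have "\<dots> = B $$ (r,c)"
    proof (cases "r < n")
      case True
      have e: "n - r = Suc (n - 1 - r)" using True by simp
      show ?thesis using True r c unfolding A_def B_def Vmat_def
        by (simp add: e algebra_simps)
    next
      case False
      then have "r = n" using r by simp
      then show ?thesis using c unfolding A_def B_def Vmat_def by simp
    qed
    finally show "(L * A) $$ (r,c) = B $$ (r,c)" .
  qed
  have BC: "B \<in> carrier_mat ?N ?N" unfolding B_def by simp
  have "det A = det B" using det_mult[OF LC AC] detL LA by simp
  also have "det B = (\<Sum>i<?N. B $$ (i,n) * cofactor B i n)"
    by (rule laplace_expansion_column[OF BC]) simp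
  also have "\<dots> = cofactor B n n"
    by (subst sum.remove[of _ n]) (auto simp: B_def intro!: sum.neutral)
  also have "\<dots> = det (mat_delete B n n)" unfolding cofactor_def by simp
  also have "mat_delete B n n = mat n n (\<lambda>(r,c). t c ^ (n - 1 - r) * (t c - t n))"
    unfolding mat_delete_def B_def by (rule eq_matI) auto
  also have "det \<dots> = (\<Prod>c<n. t c - t n) * det (Vmat n t)"
    unfolding Vmat_def by (rule det_col_scale)
  also have "\<dots> = Vd ?N t" using Suc.IH Vd_Suc by simp
  finally show ?case unfolding A_def .
qed

definition qm :: "nat \<Rightarrow> (complex \<Rightarrow> complex) \<Rightarrow> (nat \<Rightarrow> complex) \<Rightarrow> complex mat" where
  "qm n G t = mat n n (\<lambda>(r, c). if r = 0 then G (t c) else t c ^ (n - 1 - r))"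

definition Kc :: "nat \<Rightarrow> nat \<Rightarrow> (nat \<Rightarrow> complex) \<Rightarrow> complex" where
  "Kc n c t = cofactor (qm n (\<lambda>_. 0) t) 0 c"

definition nu :: "nat \<Rightarrow> nat \<Rightarrow> (nat \<Rightarrow> complex) \<Rightarrow> complex" where
  "nu n m t = det (qm n (\<lambda>z. z ^ m) t)"

lemma qm_carrier[simp]: "qm n G t \<in> carrier_mat n n" unfolding qm_def by simp

lemma qmat_qm: "qmat n F i t = qm n (\<lambda>z. Fc F z * z ^ i) t"
  unfolding qmat_def qm_def by simp

lemma cofactor_qm: "cofactor (qm n G t) 0 c = Kc n c t"
proof -
  have "mat_delete (qm n G t) 0 c = mat_delete (qm n (\<lambda>_. 0) t) 0 c"
    by (rule eq_matI) (auto simp: mat_delete_def qm_def)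
  then show ?thesis unfolding Kc_def cofactor_def by simp
qed

lemma lap: assumes "0 < n" shows "det (qm n G t) = (\<Sum>c<n. G (t c) * Kc n c t)"
proof -
  have "det (qm n G t) = (\<Sum>j<n. qm n G t $$ (0,j) * cofactor (qm n G t) 0 j)"
    by (rule laplace_expansion_row[OF qm_carrier]) (rule assms)
  also have "\<dots> = (\<Sum>c<n. G (t c) * Kc n c t)"
    unfolding cofactor_qm using assms by (intro sum.cong) (auto simp: qm_def)
  finally show ?thesis .
qed

lemma nu_lap: "0 < n \<Longrightarrow> nu n m t = (\<Sum>c<n. t c ^ m * Kc n c t)"
  unfolding nu_def by (rule lap)

lemma nu_V: "nu n (n - 1) t = Vd n t"
proof -
  have "qm n (\<lambda>z. z ^ (n - 1)) t = Vmat n t"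
    by (rule eq_matI) (auto simp: qm_def Vmat_def)
  then show ?thesis unfolding nu_def using vandermonde by simp
qed

lemma nu_zero: assumes "m < n - 1" shows "nu n m t = 0"
proof -
  let ?k = "n - 1 - m"
  have "row (qm n (\<lambda>z. z ^ m) t) 0 = row (qm n (\<lambda>z. z ^ m) t) ?k"
    using assms by (intro eq_vecI) (auto simp: qm_def)
  then show ?thesis unfolding nu_def
    by (rule det_identical_rows[OF qm_carrier, rotated 3]) (use assms in auto)
qed

lemma qm_diag: assumes "a < b" "b < n" "t a = t b" shows "det (qm n G t) = 0"
proof -
  have "col (qm n G t) a = col (qm n G t) b"
    using assms by (intro eq_vecI) (auto simp: qm_def)
  then show ?thesis
    by (rule det_identical_columns[OF qm_carrier, rotated 3]) (use assms in auto)
qed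

lemma det_qpoly:
  assumes "\<And>t. A t \<in> carrier_mat m m" "\<And>r c. r < m \<Longrightarrow> c < m \<Longrightarrow> (\<lambda>t. A t $$ (r,c)) \<in> qpoly n"
  shows "(\<lambda>t. det (A t)) \<in> qpoly n"
proof -
  have "(\<lambda>t. \<Sum>p\<in>{p. p permutes {0..<m}}. signof p * (\<Prod>i\<in>{0..<m}. A t $$ (i, p i))) \<in> qpoly n"
  proof (rule qpoly_sum)
    show "finite {p. p permutes {0..<m}}" by (rule finite_permutations) simp
    fix p assume p: "p \<in> {p. p permutes {0..<m}}"
    show "(\<lambda>t. signof p * (\<Prod>i\<in>{0..<m}. A t $$ (i, p i))) \<in> qpoly n"
    proof (rule qpoly_scale)
      show "signof p \<in> \<rat>" by simp
      show "(\<lambda>t. \<Prod>i\<in>{0..<m}. A t $$ (i, p i)) \<in> qpoly n"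
        by (rule qpoly_prod) (use p assms(2) permutes_in_image in auto)
    qed
  qed
  then show ?thesis using det_def'[OF assms(1)] by simp
qed

lemma qm_qpoly: assumes "\<And>c. c < n \<Longrightarrow> (\<lambda>t. G (t c)) \<in> qpoly n"
  shows "(\<lambda>t. det (qm n G t)) \<in> qpoly n"
proof (rule det_qpoly[OF qm_carrier])
  fix r c assume rc: "r < n" "c < n"
  show "(\<lambda>t. qm n G t $$ (r, c)) \<in> qpoly n"
  proof (cases "r = 0")
    case True then show ?thesis using rc assms by (simp add: qm_def)
  next
    case False then show ?thesis using rc by (simp add: qm_def qpoly_pow qvar)
  qed
qed

lemma nu_qpoly: "nu n m \<in> qpoly n"
  unfolding nu_def[abs_def] by (rule qm_qpoly) (auto intro: qpoly_pow qvar)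

lemma Kc_qpoly: "Kc n c \<in> qpoly n"
proof -
  have "(\<lambda>t. (-1)^(0+c) * det (mat_delete (qm n (\<lambda>_. 0) t) 0 c)) \<in> qpoly n"
  proof (rule qpoly_scale)
    show "(-1)^(0+c) \<in> \<rat>" by simp
    show "(\<lambda>t. det (mat_delete (qm n (\<lambda>_. 0) t) 0 c)) \<in> qpoly n"
    proof (rule det_qpoly)
      show "mat_delete (qm n (\<lambda>_. 0) t) 0 c \<in> carrier_mat (n-1) (n-1)" for t
        by (rule mat_delete_carrier[OF qm_carrier])
      fix r c' assume rc: "r < n - 1" "c' < n - 1"
      define j where "j = (if c' < c then c' else Suc c')"
      have j: "j < n" using rc unfolding j_def by auto
      have "mat_delete (qm n (\<lambda>_. 0) t) 0 c $$ (r, c') = t j ^ (n - 1 - Suc r)" for t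
        using rc unfolding mat_delete_def qm_def j_def by simp
      then have "(\<lambda>t. mat_delete (qm n (\<lambda>_. 0) t) 0 c $$ (r, c')) = (\<lambda>t. t j ^ (n - 1 - Suc r))"
        by (rule ext)
      then show "(\<lambda>t. mat_delete (qm n (\<lambda>_. 0) t) 0 c $$ (r, c')) \<in> qpoly n"
        using qpoly_pow[OF qvar[OF j]] by simp
    qed
  qed
  then show ?thesis unfolding Kc_def[abs_def] cofactor_def by simp
qed

lemma qm_perm: assumes "\<sigma> permutes {..<n}"
  shows "det (qm n G (t \<circ> \<sigma>)) = of_int (sign \<sigma>) * det (qm n G t)"
proof -
  let ?A = "transpose_mat (qm n G t)"
  have AC: "?A \<in> carrier_mat n n" by simp
  have s: "\<sigma> permutes {0..<n}" using assms by (simp add: atLeast0LessThan)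
  have "mat n n (\<lambda>(i,j). ?A $$ (\<sigma> i, j)) = transpose_mat (qm n G (t \<circ> \<sigma>))"
    using s by (intro eq_matI) (auto simp: qm_def permutes_in_image)
  then have "det (transpose_mat (qm n G (t \<circ> \<sigma>))) = of_int (sign \<sigma>) * det ?A"
    using det_permute_rows[OF AC s] by simp
  then show ?thesis using det_transpose[OF qm_carrier] by simp
qed

definition Alt :: "nat \<Rightarrow> ((nat \<Rightarrow> complex) \<Rightarrow> complex) \<Rightarrow> (nat \<Rightarrow> complex) \<Rightarrow> complex" where
  "Alt n h t = (\<Sum>\<sigma>\<in>{\<sigma>. \<sigma> permutes {..<n}}. of_int (sign \<sigma>) * h (t \<circ> \<sigma>))"

lemma Alt_qpoly: "h \<in> qpoly n \<Longrightarrow> Alt n h \<in> qpoly n"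
  unfolding Alt_def[abs_def]
  by (rule qpoly_sum) (auto intro!: qpoly_scale qpoly_perm finite_permutations)

lemma Alt_perm: assumes r: "\<rho> permutes {..<n}"
  shows "Alt n h (t \<circ> \<rho>) = of_int (sign \<rho>) * Alt n h t"
proof -
  have ir: "Hilbert_Choice.inv \<rho> permutes {..<n}" using permutes_inv[OF r] .
  have "Alt n h (t \<circ> \<rho>) = (\<Sum>\<sigma>\<in>{\<sigma>. \<sigma> permutes {..<n}}. of_int (sign (Hilbert_Choice.inv \<rho> \<circ> \<sigma>)) * h (t \<circ> \<rho> \<circ> (Hilbert_Choice.inv \<rho> \<circ> \<sigma>)))"
    unfolding Alt_def by (rule setum_permutations_compose_left[OF ir])
  also have "\<dots> = (\<Sum>\<sigma>\<in>{\<sigma>. \<sigma> permutes {..<n}}. of_int (sign \<rho>) * (of_int (sign \<sigma>) * h (t \<circ> \<sigma>)))"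
  proof (rule sum.cong[OF refl])
    fix \<sigma> assume "\<sigma> \<in> {\<sigma>. \<sigma> permutes {..<n}}"
    then have s: "\<sigma> permutes {..<n}" by simp
    have "sign (Hilbert_Choice.inv \<rho> \<circ> \<sigma>) = sign \<rho> * sign \<sigma>"
      using sign_compose[OF permutes_imp_permutation[OF _ ir] permutes_imp_permutation[OF _ s]]
        sign_inverse[OF permutes_imp_permutation[OF _ r]] by simp
    moreover have "t \<circ> \<rho> \<circ> (Hilbert_Choice.inv \<rho> \<circ> \<sigma>) = t \<circ> \<sigma>"
      using permutes_inv_o(1)[OF r] by (metis comp_assoc id_comp)
    ultimately show "of_int (sign (Hilbert_Choice.inv \<rho> \<circ> \<sigma>)) * h (t \<circ> \<rho> \<circ> (Hilbert_Choice.inv \<rho> \<circ> \<sigma>)) = of_int (sign \<rho>) * (of_int (sign \<sigma>) * h (t \<circ> \<sigma>))"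
      by simp
  qed
  also have "\<dots> = of_int (sign \<rho>) * Alt n h t" unfolding Alt_def by (simp add: sum_distrib_left)
  finally show ?thesis .
qed

lemma Alt_diag: assumes "a < b" "b < n" "t a = t b" shows "Alt n h t = 0"
proof -
  have r: "transpose a b permutes {..<n}" using assms by (intro permutes_swap_id) auto
  have "t \<circ> transpose a b = t" using assms by (auto simp: transpose_def)
  then have "Alt n h t = - Alt n h t" using Alt_perm[OF r, of h t] assms sign_swap_id[of a b] by simp
  then show ?thesis by simp
qed

definition recur :: "nat \<Rightarrow> (nat \<Rightarrow> complex) \<Rightarrow> (nat \<Rightarrow> complex) \<Rightarrow> bool" where
  "recur n t u \<longleftrightarrow> (\<forall>k. u (k + n) = - (\<Sum>j<n. coeff (\<Prod>c<n. [:- t c, 1:]) j * u (k + j)))"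

lemma recur_geom: assumes "c < n" shows "recur n t (\<lambda>k. t c ^ k)"
proof -
  define P where "P = (\<Prod>c<n. [:- t c, 1:])"
  have dP: "degree P = n" unfolding P_def by (subst degree_prod_sum_eq) auto
  have cP: "coeff P n = 1" using lead_coeff_prod[of "\<lambda>c. [:- t c, 1:]" "{..<n}"] dP unfolding P_def by simp
  have "poly P (t c) = 0" unfolding P_def poly_prod using assms by (auto intro!: prod_zero)
  then have "(\<Sum>j\<le>n. coeff P j * t c ^ j) = 0" using poly_altdef[of P] dP by simp
  then have "(\<Sum>j<n. coeff P j * t c ^ j) + t c ^ n = 0" using cP by (simp add: lessThan_Suc_atMost[symmetric])
  then have e: "t c ^ n = - (\<Sum>j<n. coeff P j * t c ^ j)" by (simp add: eq_neg_iff_add_eq_0 add.commute)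
  show ?thesis unfolding recur_def P_def[symmetric]
  proof
    fix k
    have "t c ^ (k + n) = t c ^ k * t c ^ n" by (simp add: power_add)
    also have "\<dots> = - (\<Sum>j<n. coeff P j * t c ^ (k + j))"
      unfolding e by (simp add: sum_distrib_left power_add algebra_simps)
    finally show "t c ^ (k + n) = - (\<Sum>j<n. coeff P j * t c ^ (k + j))" .
  qed
qed

lemma recur_lin: "recur n t u \<Longrightarrow> recur n t v \<Longrightarrow> recur n t (\<lambda>k. a * u k + b * v k)"
  unfolding recur_def by (simp add: sum.distrib sum_distrib_left algebra_simps)

lemma recur_scale: "recur n t u \<Longrightarrow> recur n t (\<lambda>k. a * u k)"
  using recur_lin[of n t u u a 0] by simp

lemma recur_diff: "recur n t u \<Longrightarrow> recur n t v \<Longrightarrow> recur n t (\<lambda>k. u k - v k)"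
  using recur_lin[of n t u v 1 "-1"] by simp

lemma recur_sum: "finite A \<Longrightarrow> (\<And>x. x \<in> A \<Longrightarrow> recur n t (f x)) \<Longrightarrow> recur n t (\<lambda>k. \<Sum>x\<in>A. f x k)"
proof (induction A rule: finite_induct)
  case empty then show ?case by (simp add: recur_def)
next
  case (insert x A)
  then show ?case using recur_lin[of n t "f x" "\<lambda>k. \<Sum>x\<in>A. f x k" 1 1] by simp
qed

lemma recur_zero: assumes "recur n t u" "\<And>k. k < n \<Longrightarrow> u k = 0" shows "u k = 0"
proof (induction k rule: less_induct)
  case (less k)
  show ?case
  proof (cases "k < n")
    case True then show ?thesis using assms(2) by simp
  next
    case False
    then have k: "k = (k - n) + n" by simp
    have "u k = - (\<Sum>j<n. coeff (\<Prod>c<n. [:- t c, 1:]) j * u (k - n + j))"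
      using assms(1) k unfolding recur_def by metis
    also have "\<dots> = 0" using less.IH False by (intro iffD2[OF neg_equal_0_iff_equal] sum.neutral) auto
    finally show ?thesis .
  qed
qed

lemma tri:
  fixes \<mu> \<eta> :: "nat \<Rightarrow> (nat \<Rightarrow> complex) \<Rightarrow> complex"
  assumes "\<And>k. \<mu> k \<in> qpoly n" "\<And>k. \<eta> k \<in> qpoly n"
  shows "\<exists>\<sigma>. (\<forall>k. \<sigma> k \<in> qpoly n) \<and> (\<forall>k\<in>{1..m}. \<forall>t. \<mu> k t = \<sigma> k t + (\<Sum>k'\<in>{1..<k}. \<sigma> k' t * \<eta> (k + N - k') t))"
proof (induction m)
  case 0 then show ?case using qpoly_zero by (intro exI[of _ "\<lambda>_ _. 0"]) auto
next
  case (Suc m)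
  then obtain \<sigma> where s: "\<forall>k. \<sigma> k \<in> qpoly n" "\<forall>k\<in>{1..m}. \<forall>t. \<mu> k t = \<sigma> k t + (\<Sum>k'\<in>{1..<k}. \<sigma> k' t * \<eta> (k + N - k') t)"
    by blast
  define \<sigma>' where "\<sigma>' = \<sigma>(Suc m := (\<lambda>t. \<mu> (Suc m) t - (\<Sum>k'\<in>{1..<Suc m}. \<sigma> k' t * \<eta> (Suc m + N - k') t)))"
  show ?case
  proof (intro exI[of _ \<sigma>'] conjI allI ballI)
    fix k
    show "\<sigma>' k \<in> qpoly n"
    proof (cases "k = Suc m")
      case True
      have "(\<lambda>t. \<Sum>k'\<in>{1..<Suc m}. \<sigma> k' t * \<eta> (Suc m + N - k') t) \<in> qpoly n"
        using s(1) assms(2) by (intro qpoly_sum qmult) auto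
      then show ?thesis using True assms(1) unfolding \<sigma>'_def by (simp add: qpoly_diff)
    next
      case False then show ?thesis using s(1) unfolding \<sigma>'_def by simp
    qed
  next
    fix k t assume k: "k \<in> {1..Suc m}"
    have eq: "(\<Sum>k'\<in>{1..<k}. \<sigma>' k' t * \<eta> (k + N - k') t) = (\<Sum>k'\<in>{1..<k}. \<sigma> k' t * \<eta> (k + N - k') t)"
      using k unfolding \<sigma>'_def by (intro sum.cong) auto
    show "\<mu> k t = \<sigma>' k t + (\<Sum>k'\<in>{1..<k}. \<sigma>' k' t * \<eta> (k + N - k') t)"
    proof (cases "k = Suc m")
      case True
      have "\<sigma>' k t = \<mu> k t - (\<Sum>k'\<in>{1..<k}. \<sigma> k' t * \<eta> (k + N - k') t)"
        using True unfolding \<sigma>'_def by simp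
      then show ?thesis unfolding eq by simp
    next
      case False
      then have k1: "k \<in> {1..m}" using k by auto
      have "\<sigma>' k t = \<sigma> k t" using False unfolding \<sigma>'_def by simp
      then show ?thesis unfolding eq using bspec[OF s(2) k1] by simp
    qed
  qed
qed

lemma Fc_expand: "Fc F z = (\<Sum>d\<le>degree (map_poly (of_int::int\<Rightarrow>complex) F). coeff (map_poly (of_int::int\<Rightarrow>complex) F) d * z ^ d)"
  unfolding Fc_def by (rule poly_altdef)

lemma aux_lin:
  fixes c p x y :: complex
  shows "c * (p * ((\<Sum>d\<in>A. g d * x ^ d) - (\<Sum>d\<in>A. g d * y ^ d))) = (\<Sum>d\<in>A. g d * (c * (p * (x ^ d - y ^ d))))"
proof -
  have "(\<Sum>d\<in>A. g d * (c * (p * (x ^ d - y ^ d)))) = (\<Sum>d\<in>A. (c * p) * (g d * x ^ d) - (c * p) * (g d * y ^ d))"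
    by (intro sum.cong) (auto simp: algebra_simps)
  also have "\<dots> = (c * p) * (\<Sum>d\<in>A. g d * x ^ d) - (c * p) * (\<Sum>d\<in>A. g d * y ^ d)"
    by (simp add: sum_subtractf sum_distrib_left)
  finally show ?thesis by (simp add: algebra_simps)
qed

lemma core:
  assumes n2: "2 \<le> n" and p: "p \<in> qpoly n" and i: "Suc i < n"
  shows "\<exists>w. (\<forall>a. w a \<in> qpoly n) \<and> (\<forall>t. Alt n (\<lambda>t. p t * (Fc F (t (Suc i)) - Fc F (t i))) t = (\<Sum>a<n-1. w a t * det (qm n (\<lambda>z. Fc F z * z ^ a) t)))"
proof -
  have n0: "0 < n" using n2 by simp
  define B where "B = (\<lambda>k. Alt n (\<lambda>t. p t * (t (Suc i) ^ k - t i ^ k)))"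
  have Bq: "B k \<in> qpoly n" for k
    unfolding B_def using i by (intro Alt_qpoly qmult p qpoly_diff qpoly_pow qvar) auto
  have "\<forall>k. \<exists>q\<in>qpoly n. \<forall>t. B k t = Vd n t * q t"
  proof
    fix k show "\<exists>q\<in>qpoly n. \<forall>t. B k t = Vd n t * q t"
      by (rule AS[OF Bq]) (auto simp: B_def intro: Alt_diag)
  qed
  then obtain \<mu> where mu: "\<And>k. \<mu> k \<in> qpoly n" "\<And>k t. B k t = Vd n t * \<mu> k t" by metis
  have "\<forall>m. \<exists>q\<in>qpoly n. \<forall>t. nu n m t = Vd n t * q t"
  proof
    fix m show "\<exists>q\<in>qpoly n. \<forall>t. nu n m t = Vd n t * q t"
      by (rule AS[OF nu_qpoly]) (auto simp: nu_def intro: qm_diag)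
  qed
  then obtain \<eta>0 where eta0: "\<And>m. \<eta>0 m \<in> qpoly n" "\<And>m t. nu n m t = Vd n t * \<eta>0 m t" by metis
  define \<eta> where "\<eta> = (\<lambda>m. if m = n - 1 then (\<lambda>t. 1) else if m < n - 1 then (\<lambda>t. 0) else \<eta>0 m)"
  have etaq: "\<eta> m \<in> qpoly n" for m unfolding \<eta>_def using eta0(1) qpoly_one qpoly_zero by auto
  have eta: "nu n m t = Vd n t * \<eta> m t" for m t
  proof (cases "m = n - 1")
    case True then show ?thesis unfolding \<eta>_def using nu_V[of n t] by simp
  next
    case False
    show ?thesis
    proof (cases "m < n - 1")
      case True then show ?thesis unfolding \<eta>_def using nu_zero[OF True] False by simp
    next
      case False2: False
      then show ?thesis unfolding \<eta>_def using eta0(2)[of m t] False by simp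
    qed
  qed
  have eta1: "\<eta> (n - 1) t = 1" "\<eta> (n - Suc 0) t = 1" for t unfolding \<eta>_def by simp_all
  obtain \<sigma> where sg: "\<And>k. \<sigma> k \<in> qpoly n"
    "\<And>k t. k \<in> {1..n-1} \<Longrightarrow> \<mu> k t = \<sigma> k t + (\<Sum>k'\<in>{1..<k}. \<sigma> k' t * \<eta> (k + (n-1) - k') t)"
    using tri[of \<mu> n \<eta> "n-1" "n-1"] mu(1) etaq by blast
  define s where "s = (\<lambda>a. \<sigma> (n - 1 - a))"
  have init: "B k t = (\<Sum>a<n-1. s a t * nu n (k + a) t)" if k: "k < n" for k t
  proof (cases "k = 0")
    case True
    have "B k t = 0" unfolding B_def Alt_def True by simp
    moreover have "(\<Sum>a<n-1. s a t * nu n (k + a) t) = 0" using True nu_zero by simp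
    ultimately show ?thesis by simp
  next
    case False
    have "(\<Sum>a<n-1. s a t * nu n (k + a) t) = (\<Sum>k'\<in>{1..n-1}. \<sigma> k' t * nu n (k + (n-1) - k') t)"
      unfolding s_def
      by (rule sum.reindex_bij_witness[of _ "\<lambda>k'. n - 1 - k'" "\<lambda>a. n - 1 - a"]) auto
    also have "\<dots> = (\<Sum>k'\<in>{1..k}. \<sigma> k' t * nu n (k + (n-1) - k') t)"
      using k by (intro sum.mono_neutral_right) (auto simp: nu_zero)
    also have "{1..k} = insert k {1..<k}" using False by auto
    also have "(\<Sum>k'\<in>insert k {1..<k}. \<sigma> k' t * nu n (k + (n-1) - k') t)
       = \<sigma> k t * nu n (n-1) t + (\<Sum>k'\<in>{1..<k}. \<sigma> k' t * nu n (k + (n-1) - k') t)"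
      using False by (subst sum.insert) auto
    also have "\<dots> = Vd n t * (\<sigma> k t + (\<Sum>k'\<in>{1..<k}. \<sigma> k' t * \<eta> (k + (n-1) - k') t))"
      by (simp add: eta eta1 sum_distrib_left algebra_simps)
    also have "\<dots> = Vd n t * \<mu> k t" using sg(2)[of k t] False k by simp
    also have "\<dots> = B k t" using mu(2) by simp
    finally show ?thesis by simp
  qed
  have ext: "B k t = (\<Sum>a<n-1. s a t * nu n (k + a) t)" for k t
  proof -
    define u where "u = (\<lambda>k. B k t - (\<Sum>a<n-1. s a t * nu n (k + a) t))"
    have rB: "recur n t (\<lambda>k. B k t)"
    proof -
      have "recur n t (\<lambda>k. \<Sum>\<sigma>\<in>{\<sigma>. \<sigma> permutes {..<n}}. of_int (sign \<sigma>) * (p (t \<circ> \<sigma>) * ((t \<circ> \<sigma>) (Suc i) ^ k - (t \<circ> \<sigma>) i ^ k)))"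
      proof (rule recur_sum)
        show "finite {\<sigma>. \<sigma> permutes {..<n}}" by (rule finite_permutations) simp
        fix \<sigma> assume "\<sigma> \<in> {\<sigma>. \<sigma> permutes {..<n}}"
        then have sp: "\<sigma> permutes {..<n}" by simp
        have b: "\<sigma> (Suc i) < n" "\<sigma> i < n" using i permutes_in_image[OF sp] by auto
        have r: "recur n t (\<lambda>k. t (\<sigma> (Suc i)) ^ k - t (\<sigma> i) ^ k)"
          by (rule recur_diff[OF recur_geom[OF b(1)] recur_geom[OF b(2)]])
        have e: "(\<lambda>k. of_int (sign \<sigma>) * (p (t \<circ> \<sigma>) * ((t \<circ> \<sigma>) (Suc i) ^ k - (t \<circ> \<sigma>) i ^ k)))
            = (\<lambda>k. (of_int (sign \<sigma>) * p (t \<circ> \<sigma>)) * (t (\<sigma> (Suc i)) ^ k - t (\<sigma> i) ^ k))"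
          by (simp add: mult.assoc)
        show "recur n t (\<lambda>k. of_int (sign \<sigma>) * (p (t \<circ> \<sigma>) * ((t \<circ> \<sigma>) (Suc i) ^ k - (t \<circ> \<sigma>) i ^ k)))"
          unfolding e by (rule recur_scale[OF r])
      qed
      then show ?thesis unfolding B_def Alt_def .
    qed
    have rnu: "recur n t (\<lambda>k. nu n (k + a) t)" for a
    proof -
      have e: "(\<lambda>k. nu n (k + a) t) = (\<lambda>k. \<Sum>c<n. (t c ^ a * Kc n c t) * t c ^ k)"
        using nu_lap[OF n0] by (simp add: power_add algebra_simps)
      show ?thesis unfolding e by (rule recur_sum) (auto intro!: recur_scale recur_geom)
    qed
    have ru: "recur n t u" unfolding u_def
      by (rule recur_diff[OF rB recur_sum]) (auto intro!: recur_scale rnu)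
    have "u k = 0" by (rule recur_zero[OF ru]) (simp add: u_def init)
    then show ?thesis unfolding u_def by simp
  qed
  define D where "D = degree (map_poly (of_int::int\<Rightarrow>complex) F)"
  define \<gamma> where "\<gamma> = (\<lambda>d. coeff (map_poly (of_int::int\<Rightarrow>complex) F) d)"
  have FE: "Fc F z = (\<Sum>d\<le>D. \<gamma> d * z ^ d)" for z unfolding D_def \<gamma>_def by (rule Fc_expand)
  show ?thesis
  proof (intro exI[of _ s] conjI allI)
    show "s a \<in> qpoly n" for a unfolding s_def using sg(1) by simp
    fix t
    have "Alt n (\<lambda>t. p t * (Fc F (t (Suc i)) - Fc F (t i))) t
        = (\<Sum>\<sigma>\<in>{\<sigma>. \<sigma> permutes {..<n}}. \<Sum>d\<le>D. \<gamma> d * (of_int (sign \<sigma>) * (p (t \<circ> \<sigma>) * ((t \<circ> \<sigma>) (Suc i) ^ d - (t \<circ> \<sigma>) i ^ d))))"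
      unfolding Alt_def FE by (intro sum.cong refl) (rule aux_lin)
    also have "\<dots> = (\<Sum>d\<le>D. \<gamma> d * B d t)"
      unfolding B_def Alt_def by (subst sum.swap) (simp add: sum_distrib_left)
    also have "\<dots> = (\<Sum>d\<le>D. \<gamma> d * (\<Sum>a<n-1. s a t * nu n (d + a) t))" using ext by simp
    also have "\<dots> = (\<Sum>a<n-1. s a t * (\<Sum>d\<le>D. \<gamma> d * nu n (d + a) t))"
      by (simp add: sum_distrib_left sum.swap[of _ "{..D}"] algebra_simps)
    also have "\<dots> = (\<Sum>a<n-1. s a t * det (qm n (\<lambda>z. Fc F z * z ^ a) t))"
    proof (intro sum.cong refl arg_cong[where f="\<lambda>x. s _ t * x"])
      fix a
      have "det (qm n (\<lambda>z. Fc F z * z ^ a) t) = (\<Sum>c<n. (Fc F (t c) * t c ^ a) * Kc n c t)"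
        by (rule lap[OF n0])
      also have "\<dots> = (\<Sum>c<n. \<Sum>d\<le>D. \<gamma> d * (t c ^ (d + a) * Kc n c t))"
        unfolding FE by (simp add: sum_distrib_left sum_distrib_right power_add algebra_simps)
      also have "\<dots> = (\<Sum>d\<le>D. \<gamma> d * nu n (d + a) t)"
        by (subst sum.swap) (simp add: nu_lap[OF n0] sum_distrib_left)
      finally show "(\<Sum>d\<le>D. \<gamma> d * nu n (d + a) t) = det (qm n (\<lambda>z. Fc F z * z ^ a) t)" by simp
    qed
    finally show "Alt n (\<lambda>t. p t * (Fc F (t (Suc i)) - Fc F (t i))) t = (\<Sum>a<n-1. s a t * det (qm n (\<lambda>z. Fc F z * z ^ a) t))" .
  qed
qed

definition PI :: "nat \<Rightarrow> int poly \<Rightarrow> (nat \<Rightarrow> complex) \<Rightarrow> complex" where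
  "PI n F t = (\<Prod>i<n. Fc F (t i))"

lemma PI_qpoly: "PI n F \<in> qpoly n"
  unfolding PI_def[abs_def] by (rule qpoly_prod) (auto intro: qpoly_Fc)

lemma PI_nz: "t \<in> pts n F \<Longrightarrow> PI n F t \<noteq> 0"
  unfolding pts_def PI_def by auto

lemma pts_perm: assumes t: "t \<in> pts n F" and s: "\<sigma> permutes {..<n}" shows "t \<circ> \<sigma> \<in> pts n F"
proof -
  have "\<forall>i\<ge>n. (t \<circ> \<sigma>) i = 0" using t permutes_not_in[OF s] unfolding pts_def by auto
  moreover have "(\<Prod>i<n. (t \<circ> \<sigma>) i) = 1"
    using prod.permute[OF s, of t] t unfolding pts_def by simp
  moreover have "\<forall>i<n. Fc F ((t \<circ> \<sigma>) i) \<noteq> 0"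
    using t permutes_in_image[OF s] unfolding pts_def by auto
  ultimately show ?thesis unfolding pts_def by simp
qed

lemma PI_perm: "\<sigma> permutes {..<n} \<Longrightarrow> PI n F (t \<circ> \<sigma>) = PI n F t"
  unfolding PI_def using prod.permute[of \<sigma> "{..<n}" "\<lambda>i. Fc F (t i)"] by (simp add: o_def)

lemma RF_intro:
  assumes "p \<in> qpoly n" "\<And>t. t \<in> pts n F \<Longrightarrow> g t = p t / PI n F t ^ k"
  shows "restrict g (pts n F) \<in> RF n F"
proof -
  have "restrict g (pts n F) = restrict (\<lambda>t. p t / (\<Prod>i<n. Fc F (t i)) ^ k) (pts n F)"
    using assms(2) unfolding PI_def by (intro restrict_ext) auto
  then show ?thesis unfolding RF_def using assms(1) by blast
qed

lemma RF_elim: assumes "f \<in> RF n F" shows "\<exists>p k. p \<in> qpoly n \<and> (\<forall>t\<in>pts n F. f t = p t / PI n F t ^ k)"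
proof -
  obtain p k where "p \<in> qpoly n" "f = restrict (\<lambda>t. p t / (\<Prod>i<n. Fc F (t i)) ^ k) (pts n F)"
    using assms unfolding RF_def by blast
  then show ?thesis unfolding PI_def by (intro exI[of _ p] exI[of _ k]) auto
qed

lemma RF_comb:
  assumes A: "finite A" and f: "\<And>x. x \<in> A \<Longrightarrow> f x \<in> RF n F" and q: "\<And>x. x \<in> A \<Longrightarrow> q x \<in> qpoly n"
  shows "restrict (\<lambda>t. \<Sum>x\<in>A. f x t * q x t) (pts n F) \<in> RF n F"
proof -
  have "\<forall>x\<in>A. \<exists>p k. p \<in> qpoly n \<and> (\<forall>t\<in>pts n F. f x t = p t / PI n F t ^ k)" using f RF_elim by blast
  then obtain p k where pk: "\<And>x. x \<in> A \<Longrightarrow> p x \<in> qpoly n" "\<And>x t. x \<in> A \<Longrightarrow> t \<in> pts n F \<Longrightarrow> f x t = p x t / PI n F t ^ k x"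
    by metis
  define K where "K = (\<Sum>x\<in>A. k x)"
  show ?thesis
  proof (rule RF_intro)
    show "(\<lambda>t. \<Sum>x\<in>A. p x t * PI n F t ^ (K - k x) * q x t) \<in> qpoly n"
      using pk(1) q A by (intro qpoly_sum qmult qpoly_pow PI_qpoly) auto
    fix t assume t: "t \<in> pts n F"
    have nz: "PI n F t \<noteq> 0" using PI_nz[OF t] .
    have "f x t * q x t = p x t * PI n F t ^ (K - k x) * q x t / PI n F t ^ K" if x: "x \<in> A" for x
    proof -
      have le: "k x \<le> K" unfolding K_def using A x by (intro member_le_sum) auto
      have "PI n F t ^ K = PI n F t ^ k x * PI n F t ^ (K - k x)" using le by (simp add: power_add[symmetric])
      then show ?thesis using pk(2)[OF x t] nz by (simp add: field_simps)
    qed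
    then show "(\<Sum>x\<in>A. f x t * q x t) = (\<Sum>x\<in>A. p x t * PI n F t ^ (K - k x) * q x t) / PI n F t ^ K"
      by (simp add: sum_divide_distrib)
  qed
qed

lemma qgen_I:
  assumes n2: "2 \<le> n" and a: "a < n - 1"
  shows "\<exists>c. (\<forall>i. c i \<in> qpoly n) \<and> (\<forall>t. det (qm n (\<lambda>z. Fc F z * z ^ a) t) = (\<Sum>i<n-1. c i t * (Fc F (t (Suc i)) - Fc F (t i))))"
proof -
  have n0: "0 < n" using n2 by simp
  define c where "c i t = (\<Sum>j<n. if i < j then t j ^ a * Kc n j t else 0)" for i t
  show ?thesis
  proof (intro exI[of _ c] conjI allI)
    fix i
    show "c i \<in> qpoly n" unfolding c_def[abs_def]
    proof (rule qpoly_sum)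
      fix j assume j: "j \<in> {..<n}"
      show "(\<lambda>t. if i < j then t j ^ a * Kc n j t else 0) \<in> qpoly n"
        using j by (cases "i < j") (auto intro!: qmult qpoly_pow qvar Kc_qpoly qpoly_zero)
    qed simp
  next
    fix t
    let ?d = "\<lambda>i. Fc F (t (Suc i)) - Fc F (t i)"
    have z: "(\<Sum>j<n. t j ^ a * Kc n j t) = 0" using nu_lap[OF n0, of a t] nu_zero[OF a] by simp
    have "det (qm n (\<lambda>z. Fc F z * z ^ a) t) = (\<Sum>j<n. Fc F (t j) * t j ^ a * Kc n j t)"
      by (rule lap[OF n0])
    also have "\<dots> = (\<Sum>j<n. Fc F (t j) * t j ^ a * Kc n j t) - Fc F (t 0) * (\<Sum>j<n. t j ^ a * Kc n j t)"
      using z by simp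
    also have "\<dots> = (\<Sum>j<n. (Fc F (t j) - Fc F (t 0)) * (t j ^ a * Kc n j t))"
      by (simp add: sum_distrib_left sum_subtractf[symmetric] algebra_simps)
    also have "\<dots> = (\<Sum>j<n. (\<Sum>i<n-1. if i < j then ?d i else 0) * (t j ^ a * Kc n j t))"
    proof (intro sum.cong refl arg_cong2[where f="(*)"])
      fix j assume j: "j \<in> {..<n}"
      have "Fc F (t j) - Fc F (t 0) = (\<Sum>i<j. ?d i)" by (rule sum_lessThan_telescope[symmetric])
      also have "\<dots> = (\<Sum>i<n-1. if i < j then ?d i else 0)"
        using j by (subst sum.inter_filter[symmetric]) (auto intro!: sum.cong)
      finally show "Fc F (t j) - Fc F (t 0) = (\<Sum>i<n-1. if i < j then ?d i else 0)" .
    qed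
    also have "\<dots> = (\<Sum>i<n-1. c i t * ?d i)"
      unfolding c_def by (simp add: sum_distrib_right sum_distrib_left sum.swap[of _ "{..<n}"] algebra_simps if_distrib cong: if_cong)
    finally show "det (qm n (\<lambda>z. Fc F z * z ^ a) t) = (\<Sum>i<n-1. c i t * ?d i)" .
  qed
qed

lemma Alt_sum: "finite A \<Longrightarrow> Alt n (\<lambda>t. \<Sum>x\<in>A. h x t) t = (\<Sum>x\<in>A. Alt n (h x) t)"
  unfolding Alt_def by (simp add: sum_distrib_left sum.swap[of _ A])

theorem lemma3p10:
  fixes n :: nat and F :: "int poly"
  assumes "n \<ge> 2" and "degree F > 0"
  shows "sgn_fixed n F (IF n F) = q_span n F"
proof
  have n0: "0 < n" using assms(1) by simp
  let ?P = "{\<sigma>. \<sigma> permutes {..<n}}"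
  have finP: "finite ?P" by (rule finite_permutations) simp
  let ?Q = "\<lambda>a t. det (qm n (\<lambda>z. Fc F z * z ^ a) t)"
  have qgenQ: "qgen n F a t = ?Q a t" if "t \<in> pts n F" for a t
    using that unfolding qgen_def qmat_qm by simp
  have Qperm: "?Q a (t \<circ> \<sigma>) = of_int (sign \<sigma>) * ?Q a t" if "\<sigma> permutes {..<n}" for a t \<sigma>
    by (rule qm_perm[OF that])
  show "sgn_fixed n F (IF n F) \<subseteq> q_span n F"
  proof
    fix f assume f: "f \<in> sgn_fixed n F (IF n F)"
    then have fI: "f \<in> IF n F" and
      fs: "\<And>\<sigma> t. \<sigma> permutes {..<n} \<Longrightarrow> t \<in> pts n F \<Longrightarrow> of_int (sign \<sigma>) * f (t \<circ> \<sigma>) = f t"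
      unfolding sgn_fixed_def perm_var_def by auto
    from fI obtain a where fa: "f = restrict (\<lambda>t. \<Sum>i<n-1. a i t * (Fc F (t (Suc i)) - Fc F (t i))) (pts n F)"
      and aR: "\<forall>i<n-1. a i \<in> RF n F" unfolding IF_def by blast
    have "\<forall>i\<in>{..<n-1}. \<exists>p k. p \<in> qpoly n \<and> (\<forall>t\<in>pts n F. a i t = p t / PI n F t ^ k)"
      using aR RF_elim by blast
    then have "\<forall>i\<in>{..<n-1}. \<exists>pk. fst pk \<in> qpoly n \<and> (\<forall>t\<in>pts n F. a i t = fst pk t / PI n F t ^ snd pk)"
      by auto
    from bchoice[OF this] obtain pk where pk0: "\<forall>i\<in>{..<n-1}. fst (pk i) \<in> qpoly n \<and> (\<forall>t\<in>pts n F. a i t = fst (pk i) t / PI n F t ^ snd (pk i))"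
      by blast
    define p where "p i = fst (pk i)" for i
    define k where "k i = snd (pk i)" for i
    have pk: "\<And>i. i < n-1 \<Longrightarrow> p i \<in> qpoly n"
      "\<And>i t. i < n-1 \<Longrightarrow> t \<in> pts n F \<Longrightarrow> a i t = p i t / PI n F t ^ k i"
      using pk0 unfolding p_def k_def by auto
    define K where "K = (\<Sum>i<n-1. k i)"
    define p' where "p' i = (\<lambda>t. p i t * PI n F t ^ (K - k i))" for i
    have p'q: "p' i \<in> qpoly n" if "i < n-1" for i
      unfolding p'_def using pk(1)[OF that] by (intro qmult qpoly_pow PI_qpoly)
    have ap: "a i t = p' i t / PI n F t ^ K" if i: "i < n-1" and t: "t \<in> pts n F" for i t
    proof -
      have le: "k i \<le> K" unfolding K_def using i by (intro member_le_sum) auto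
      have "PI n F t ^ K = PI n F t ^ k i * PI n F t ^ (K - k i)" using le by (simp add: power_add[symmetric])
      then show ?thesis using pk(2)[OF i t] PI_nz[OF t] unfolding p'_def by (simp add: field_simps)
    qed
    define g where "g t = (\<Sum>i<n-1. p' i t * (Fc F (t (Suc i)) - Fc F (t i)))" for t
    have fg: "f t = g t / PI n F t ^ K" if t: "t \<in> pts n F" for t
      unfolding fa g_def using t ap by (simp add: sum_divide_distrib)
    have "\<forall>i\<in>{..<n-1}. \<exists>w. (\<forall>a. w a \<in> qpoly n) \<and> (\<forall>t. Alt n (\<lambda>t. p' i t * (Fc F (t (Suc i)) - Fc F (t i))) t = (\<Sum>a<n-1. w a t * ?Q a t))"
    proof
      fix i assume "i \<in> {..<n-1}"
      then have i: "i < n - 1" by simp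
      show "\<exists>w. (\<forall>a. w a \<in> qpoly n) \<and> (\<forall>t. Alt n (\<lambda>t. p' i t * (Fc F (t (Suc i)) - Fc F (t i))) t = (\<Sum>a<n-1. w a t * ?Q a t))"
        by (rule core[OF assms(1) p'q[OF i]]) (use i in simp)
    qed
    from bchoice[OF this] obtain w where w0: "\<forall>i\<in>{..<n-1}. (\<forall>a. w i a \<in> qpoly n) \<and> (\<forall>t. Alt n (\<lambda>t. p' i t * (Fc F (t (Suc i)) - Fc F (t i))) t = (\<Sum>a<n-1. w i a t * ?Q a t))"
      by blast
    have w: "\<And>i a. i < n-1 \<Longrightarrow> w i a \<in> qpoly n"
      "\<And>i t. i < n-1 \<Longrightarrow> Alt n (\<lambda>t. p' i t * (Fc F (t (Suc i)) - Fc F (t i))) t = (\<Sum>a<n-1. w i a t * ?Q a t)"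
      using w0 by auto
    define W where "W a t = (\<Sum>i<n-1. w i a t)" for a t
    have Wq: "W a \<in> qpoly n" for a unfolding W_def[abs_def] using w(1) by (intro qpoly_sum) auto
    have AltG: "Alt n g t = (\<Sum>a<n-1. W a t * ?Q a t)" for t
    proof -
      have "Alt n g t = (\<Sum>i<n-1. Alt n (\<lambda>t. p' i t * (Fc F (t (Suc i)) - Fc F (t i))) t)"
        unfolding g_def[abs_def] by (rule Alt_sum) simp
      also have "\<dots> = (\<Sum>i<n-1. \<Sum>a<n-1. w i a t * ?Q a t)" using w(2) by simp
      also have "\<dots> = (\<Sum>a<n-1. W a t * ?Q a t)"
        unfolding W_def sum_distrib_right by (rule sum.swap)
      finally show ?thesis .
    qed
    have cardP: "card ?P = fact n" using card_permutations[of "{..<n}" n] by simp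
    have avg: "of_nat (fact n) * f t = (\<Sum>\<sigma>\<in>?P. of_int (sign \<sigma>) * f (t \<circ> \<sigma>))" if t: "t \<in> pts n F" for t
    proof -
      have "(\<Sum>\<sigma>\<in>?P. of_int (sign \<sigma>) * f (t \<circ> \<sigma>)) = (\<Sum>\<sigma>\<in>?P. f t)"
        using fs t by (intro sum.cong) auto
      then show ?thesis using cardP by simp
    qed
    have fn0: "(of_nat (fact n) :: complex) \<noteq> 0" by simp
    have f1: "f t = (\<Sum>a<n-1. W a t * ?Q a t) / (of_nat (fact n) * PI n F t ^ K)" if t: "t \<in> pts n F" for t
    proof -
      have "of_nat (fact n) * f t = (\<Sum>\<sigma>\<in>?P. of_int (sign \<sigma>) * (g (t \<circ> \<sigma>) / PI n F t ^ K))"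
        using avg[OF t] fg pts_perm[OF t] PI_perm by (auto intro!: sum.cong)
      also have "\<dots> = Alt n g t / PI n F t ^ K" unfolding Alt_def by (simp add: sum_divide_distrib)
      finally have "of_nat (fact n) * f t = (\<Sum>a<n-1. W a t * ?Q a t) / PI n F t ^ K" using AltG by simp
      then show ?thesis using fn0 PI_nz[OF t] by (simp add: field_simps)
    qed
    define s where "s a = restrict (\<lambda>t. (1 / of_nat (fact n) ^ 2 * (\<Sum>\<sigma>\<in>?P. W a (t \<circ> \<sigma>))) / PI n F t ^ K) (pts n F)" for a
    have sR: "s a \<in> RF_W n F" for a
    proof -
      have "s a \<in> RF n F" unfolding s_def
      proof (rule RF_intro[where k = K and p = "\<lambda>t. 1 / of_nat (fact n) ^ 2 * (\<Sum>\<sigma>\<in>?P. W a (t \<circ> \<sigma>))"])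
        have "(\<lambda>t. \<Sum>\<sigma>\<in>?P. W a (t \<circ> \<sigma>)) \<in> qpoly n"
          by (rule qpoly_sum[OF finP]) (auto intro: qpoly_perm Wq)
        then show "(\<lambda>t. 1 / of_nat (fact n) ^ 2 * (\<Sum>\<sigma>\<in>?P. W a (t \<circ> \<sigma>))) \<in> qpoly n"
          by (rule qpoly_scale[OF Rats_divide[OF Rats_1 Rats_power[OF Rats_of_nat]]])
      qed simp
      moreover have "perm_var \<sigma> (s a) t = s a t" if \<sigma>: "\<sigma> permutes {..<n}" and t: "t \<in> pts n F" for \<sigma> t
      proof -
        have "(\<Sum>\<tau>\<in>?P. W a (t \<circ> \<sigma> \<circ> \<tau>)) = (\<Sum>\<tau>\<in>?P. W a (t \<circ> \<tau>))"
          using setum_permutations_compose_left[OF \<sigma>, of "\<lambda>\<tau>. W a (t \<circ> \<tau>)"] by (simp add: comp_assoc)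
        then show ?thesis unfolding perm_var_def s_def using pts_perm[OF t \<sigma>] t PI_perm[OF \<sigma>] by simp
      qed
      ultimately show ?thesis unfolding RF_W_def by blast
    qed
    have f2: "f t = (\<Sum>a<n-1. s a t * qgen n F a t)" if t: "t \<in> pts n F" for t
    proof -
      have "of_nat (fact n) * f t = (\<Sum>\<sigma>\<in>?P. of_int (sign \<sigma>) * ((\<Sum>a<n-1. W a (t \<circ> \<sigma>) * ?Q a (t \<circ> \<sigma>)) / (of_nat (fact n) * PI n F t ^ K)))"
        using avg[OF t] f1 pts_perm[OF t] PI_perm by (auto intro!: sum.cong)
      also have "\<dots> = (\<Sum>\<sigma>\<in>?P. (\<Sum>a<n-1. W a (t \<circ> \<sigma>) * ?Q a t) / (of_nat (fact n) * PI n F t ^ K))"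
      proof (intro sum.cong refl)
        fix \<sigma> assume "\<sigma> \<in> ?P"
        then have \<sigma>: "\<sigma> permutes {..<n}" by simp
        have "of_int (sign \<sigma>) * (\<Sum>a<n-1. W a (t \<circ> \<sigma>) * ?Q a (t \<circ> \<sigma>)) = (\<Sum>a<n-1. W a (t \<circ> \<sigma>) * ?Q a t)"
          unfolding Qperm[OF \<sigma>] sum_distrib_left
          by (intro sum.cong refl) (simp add: algebra_simps flip: of_int_mult)
        then show "of_int (sign \<sigma>) * ((\<Sum>a<n-1. W a (t \<circ> \<sigma>) * ?Q a (t \<circ> \<sigma>)) / (of_nat (fact n) * PI n F t ^ K))
          = (\<Sum>a<n-1. W a (t \<circ> \<sigma>) * ?Q a t) / (of_nat (fact n) * PI n F t ^ K)" by simp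
      qed
      also have "\<dots> = (\<Sum>a<n-1. (\<Sum>\<sigma>\<in>?P. W a (t \<circ> \<sigma>)) * ?Q a t) / (of_nat (fact n) * PI n F t ^ K)"
        by (simp add: sum_divide_distrib[symmetric] sum.swap[of _ ?P] sum_distrib_right)
      finally have "f t = (\<Sum>a<n-1. (\<Sum>\<sigma>\<in>?P. W a (t \<circ> \<sigma>)) * ?Q a t) / (of_nat (fact n) ^ 2 * PI n F t ^ K)"
        using fn0 PI_nz[OF t] by (simp add: field_simps power2_eq_square)
      also have "\<dots> = (\<Sum>a<n-1. s a t * qgen n F a t)"
        unfolding sum_divide_distrib
      proof (intro sum.cong refl)
        fix a
        show "(\<Sum>\<sigma>\<in>?P. W a (t \<circ> \<sigma>)) * ?Q a t / (of_nat (fact n) ^ 2 * PI n F t ^ K) = s a t * qgen n F a t"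
          unfolding s_def using t qgenQ[OF t] fn0 PI_nz[OF t] by (simp add: field_simps)
      qed
      finally show ?thesis .
    qed
    show "f \<in> q_span n F" unfolding q_span_def
    proof (intro CollectI exI conjI allI impI)
      show "f = restrict (\<lambda>t. \<Sum>i<n-1. s i t * qgen n F i t) (pts n F)"
        unfolding fa by (rule restrict_ext) (use f2 fa in simp)
      show "s i \<in> RF_W n F" for i by (rule sR)
    qed
  qed
next
  have n0: "0 < n" using assms(1) by simp
  let ?Q = "\<lambda>a t. det (qm n (\<lambda>z. Fc F z * z ^ a) t)"
  have qgenQ: "qgen n F a t = ?Q a t" if "t \<in> pts n F" for a t
    using that unfolding qgen_def qmat_qm by simp
  show "q_span n F \<subseteq> sgn_fixed n F (IF n F)"
  proof
    fix f assume "f \<in> q_span n F"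
    then obtain s where fs: "f = restrict (\<lambda>t. \<Sum>i<n-1. s i t * qgen n F i t) (pts n F)"
      and sW: "\<forall>i<n-1. s i \<in> RF_W n F" unfolding q_span_def by blast
    have "\<forall>a\<in>{..<n-1}. \<exists>c. (\<forall>i. c i \<in> qpoly n) \<and> (\<forall>t. ?Q a t = (\<Sum>i<n-1. c i t * (Fc F (t (Suc i)) - Fc F (t i))))"
      using qgen_I[OF assms(1)] by auto
    from bchoice[OF this] obtain c where c0: "\<forall>a\<in>{..<n-1}. (\<forall>i. c a i \<in> qpoly n) \<and> (\<forall>t. ?Q a t = (\<Sum>i<n-1. c a i t * (Fc F (t (Suc i)) - Fc F (t i))))"
      by blast
    have c: "\<And>a i. a < n-1 \<Longrightarrow> c a i \<in> qpoly n"
      "\<And>a t. a < n-1 \<Longrightarrow> ?Q a t = (\<Sum>i<n-1. c a i t * (Fc F (t (Suc i)) - Fc F (t i)))"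
      using c0 by auto
    define A where "A i = restrict (\<lambda>t. \<Sum>a<n-1. s a t * c a i t) (pts n F)" for i
    have AR: "A i \<in> RF n F" for i
      unfolding A_def using sW c(1) by (intro RF_comb) (auto simp: RF_W_def)
    have fI: "f \<in> IF n F" unfolding IF_def
    proof (intro CollectI exI conjI allI impI)
      show "f = restrict (\<lambda>t. \<Sum>i<n-1. A i t * (Fc F (t (Suc i)) - Fc F (t i))) (pts n F)"
        unfolding fs
      proof (rule restrict_ext)
        fix t assume t: "t \<in> pts n F"
        have "(\<Sum>a<n-1. s a t * qgen n F a t) = (\<Sum>a<n-1. s a t * (\<Sum>i<n-1. c a i t * (Fc F (t (Suc i)) - Fc F (t i))))"
          using qgenQ[OF t] c(2) by simp
        also have "\<dots> = (\<Sum>a<n-1. \<Sum>i<n-1. s a t * c a i t * (Fc F (t (Suc i)) - Fc F (t i)))"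
          by (simp add: sum_distrib_left mult.assoc)
        also have "\<dots> = (\<Sum>i<n-1. \<Sum>a<n-1. s a t * c a i t * (Fc F (t (Suc i)) - Fc F (t i)))"
          by (rule sum.swap)
        also have "\<dots> = (\<Sum>i<n-1. A i t * (Fc F (t (Suc i)) - Fc F (t i)))"
          unfolding A_def using t by (simp add: sum_distrib_right)
        finally show "(\<Sum>a<n-1. s a t * qgen n F a t) = (\<Sum>i<n-1. A i t * (Fc F (t (Suc i)) - Fc F (t i)))" .
      qed
      show "A i \<in> RF n F" for i by (rule AR)
    qed
    have "of_int (sign \<sigma>) * perm_var \<sigma> f t = f t" if \<sigma>: "\<sigma> permutes {..<n}" and t: "t \<in> pts n F" for \<sigma> t
    proof -
      have ts: "t \<circ> \<sigma> \<in> pts n F" by (rule pts_perm[OF t \<sigma>])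
      have "perm_var \<sigma> f t = (\<Sum>a<n-1. s a t * (of_int (sign \<sigma>) * qgen n F a t))"
      proof -
        have "perm_var \<sigma> f t = (\<Sum>a<n-1. s a (t \<circ> \<sigma>) * ?Q a (t \<circ> \<sigma>))"
          unfolding perm_var_def fs using ts qgenQ[OF ts] by simp
        also have "\<dots> = (\<Sum>a<n-1. s a t * (of_int (sign \<sigma>) * qgen n F a t))"
        proof (intro sum.cong refl)
          fix a assume "a \<in> {..<n-1}"
          then have "s a \<in> RF_W n F" using sW by simp
          then have "s a (t \<circ> \<sigma>) = s a t" using \<sigma> t unfolding RF_W_def perm_var_def by blast
          then show "s a (t \<circ> \<sigma>) * ?Q a (t \<circ> \<sigma>) = s a t * (of_int (sign \<sigma>) * qgen n F a t)"
            using qm_perm[OF \<sigma>] qgenQ[OF t] by simp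
        qed
        finally show ?thesis .
      qed
      have ss: "of_int (sign \<sigma>) * of_int (sign \<sigma>) = (1::complex)"
        by (simp flip: of_int_mult)
      have "of_int (sign \<sigma>) * perm_var \<sigma> f t = (\<Sum>a<n-1. (of_int (sign \<sigma>) * of_int (sign \<sigma>)) * (s a t * qgen n F a t))"
        unfolding \<open>perm_var \<sigma> f t = _\<close> sum_distrib_left by (intro sum.cong refl) (simp add: algebra_simps)
      then have "of_int (sign \<sigma>) * perm_var \<sigma> f t = (\<Sum>a<n-1. s a t * qgen n F a t)"
        unfolding ss by simp
      then show ?thesis unfolding fs using t by simp
    qed
    then show "f \<in> sgn_fixed n F (IF n F)" unfolding sgn_fixed_def using fI by blast
  qed
qed

end
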